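(* Let $q$ be a power of an odd prime and fix a partition $\mathbb{F}_q^*=\mathbb{F}_q^+\sqcup\mathbb{F}_q^-$ such that $a\in\mathbb{F}_q^+$ if and only if $-a\in\mathbb{F}_q^-$. (i) Let $\theta\in\mathbb{F}_{q^2}\setminus\mathbb{F}_q$, so that $\mathbb{F}_{q^2}=\{a\theta+b:a,b\in\mathbb{F}_q\}$. Then both $\{(x,y\theta+z):x,z\in\mathbb{F}_q,\ y\in\mathbb{F}_q^+\}$ and $\{(x,y\theta+z):x,z\in\mathbb{F}_q,\ y\in\mathbb{F}_q^-\}$ are independent sets in $G_{q^2}$. (ii) Let $t\ge3$ be odd and let $\theta\in\mathbb{F}_{q^t}$ be such that $1,\theta,\dots,\theta^{t-1}$ is a basis of $\mathbb{F}_{q^t}$ over $\mathbb{F}_q$. Then both \[ \Big\{\Big(\sum_{i=0}^{(t-3)/2}x_i\theta^i,\ \sum_{j=0}^{t-1}y_j\theta^j\Big):x_i,y_j\in\mathbb{F}_q,\ y_{t-1}\in\mathbb{F}_q^+\Big\} \] and the analogous set with $y_{t-1}\in\mathbb{F}_q^-$ are independent sets in $G_{q^t}$.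
   Context: For a power $Q$ of an odd prime, the graph $G_Q$ has vertex set $\mathbb{F}_Q\times\mathbb{F}_Q$, and distinct vertices $(x_1,x_2)$, $(y_1,y_2)$ are adjacent if and only if $(x_1+y_1)^2=x_2+y_2$ (i.e. their sum lies in $\{(a,a^2):a\in\mathbb{F}_Q\}$); $G_Q$ has no loops. *)

theory Defs
  imports Main "HOL-Computational_Algebra.Primes"
begin

definition G_adj :: "('a::field \<times> 'a) \<Rightarrow> ('a \<times> 'a) \<Rightarrow> bool" where
  "G_adj u v \<longleftrightarrow> u \<noteq> v \<and> (fst u + fst v)^2 = snd u + snd v"

definition G_independent :: "('a::field \<times> 'a) set \<Rightarrow> bool" where
  "G_independent S \<longleftrightarrow> (\<forall>u\<in>S. \<forall>v\<in>S. \<not> G_adj u v)"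

definition is_subfield :: "'a::field set \<Rightarrow> bool" where
  "is_subfield F \<longleftrightarrow> 0 \<in> F \<and> 1 \<in> F \<and>
     (\<forall>a\<in>F. \<forall>b\<in>F. a + b \<in> F \<and> a * b \<in> F) \<and>
     (\<forall>a\<in>F. - a \<in> F \<and> inverse a \<in> F)"

definition sign_partition :: "'a::field set \<Rightarrow> 'a set \<Rightarrow> 'a set \<Rightarrow> bool" where
  "sign_partition F Fp Fm \<longleftrightarrow> Fp \<union> Fm = F - {0} \<and> Fp \<inter> Fm = {} \<and>
     (\<forall>a\<in>F - {0}. a \<in> Fp \<longleftrightarrow> - a \<in> Fm)"

definition power_basis :: "'a::field set \<Rightarrow> nat \<Rightarrow> 'a \<Rightarrow> bool" where
  "power_basis F t \<theta> \<longleftrightarrow>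
     (\<forall>k. \<exists>c. (\<forall>i<t. c i \<in> F) \<and> k = (\<Sum>i<t. c i * \<theta> ^ i)) \<and>
     (\<forall>c. (\<forall>i<t. c i \<in> F) \<and> (\<Sum>i<t. c i * \<theta> ^ i) = 0 \<longrightarrow> (\<forall>i<t. c i = 0))"

definition odd_prime_power :: "nat \<Rightarrow> bool" where
  "odd_prime_power q \<longleftrightarrow> (\<exists>p k. prime p \<and> odd p \<and> k > 0 \<and> q = p ^ k)"

end

theory Submission
  imports Defs
begin

definition Sp :: "'a::field set \<Rightarrow> 'a \<Rightarrow> nat \<Rightarrow> 'a set" where
  "Sp F th n = {v. \<exists>c. (\<forall>i. c i \<in> F) \<and> v = (\<Sum>i<n. c i * th ^ i)}"

lemma SpI:
  assumes "\<forall>i. c i \<in> F" and "v = (\<Sum>i<n. c i * th ^ i)"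
  shows "v \<in> Sp F th n"
  using assms unfolding Sp_def by auto

lemma sum_pad:
  assumes "k \<le> n"
  shows "(\<Sum>i<n. (if i<k then c i else 0) * th ^ i) = (\<Sum>i<k. c i * (th::'a::field) ^ i)"
proof -
  have "(\<Sum>i<n. (if i<k then c i else 0) * th ^ i) = (\<Sum>i\<in>{..<k}. (if i<k then c i else 0) * th ^ i)"
    using assms by (intro sum.mono_neutral_right) auto
  also have "\<dots> = (\<Sum>i<k. c i * th ^ i)" by (intro sum.cong) auto
  finally show ?thesis .
qed

lemma Sp_mono:
  assumes F: "is_subfield F" and "k \<le> n" and "v \<in> Sp F th k"
  shows "v \<in> Sp F th n"
proof -
  from assms(3) obtain c where c: "\<forall>i. c i \<in> F" "v = (\<Sum>i<k. c i * th ^ i)"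
    unfolding Sp_def by auto
  have "\<forall>i. (if i<k then c i else 0) \<in> F" using c F unfolding is_subfield_def by auto
  moreover have "v = (\<Sum>i<n. (if i<k then c i else 0) * th ^ i)"
    using sum_pad[OF assms(2), of c th] c by simp
  ultimately show ?thesis by (rule SpI)
qed

lemma Sp_add:
  assumes F: "is_subfield F" and "u \<in> Sp F th n" and "v \<in> Sp F th n"
  shows "u + v \<in> Sp F th n"
proof -
  from assms(2) obtain c where c: "\<forall>i. c i \<in> F" "u = (\<Sum>i<n. c i * th ^ i)"
    unfolding Sp_def by auto
  from assms(3) obtain d where d: "\<forall>i. d i \<in> F" "v = (\<Sum>i<n. d i * th ^ i)"
    unfolding Sp_def by auto
  have "\<forall>i. c i + d i \<in> F" using c d F unfolding is_subfield_def by auto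
  moreover have "u + v = (\<Sum>i<n. (c i + d i) * th ^ i)"
    using c d by (simp add: sum.distrib distrib_right)
  ultimately show ?thesis by (rule SpI)
qed

lemma Sp_zero:
  assumes F: "is_subfield F"
  shows "0 \<in> Sp F th n"
proof -
  have "\<forall>i. (\<lambda>_. 0) i \<in> F" using F unfolding is_subfield_def by auto
  moreover have "0 = (\<Sum>i<n. (\<lambda>_. 0) i * th ^ i)" by simp
  ultimately show ?thesis by (rule SpI)
qed

lemma Sp_scale:
  assumes F: "is_subfield F" and "a \<in> F" and "v \<in> Sp F th n"
  shows "a * v \<in> Sp F th n"
proof -
  from assms(3) obtain c where c: "\<forall>i. c i \<in> F" "v = (\<Sum>i<n. c i * th ^ i)"
    unfolding Sp_def by auto
  have "\<forall>i. a * c i \<in> F" using c F assms(2) unfolding is_subfield_def by auto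
  moreover have "a * v = (\<Sum>i<n. (a * c i) * th ^ i)"
    using c by (simp add: sum_distrib_left mult.assoc)
  ultimately show ?thesis by (rule SpI)
qed

lemma Sp_shift:
  assumes F: "is_subfield F" and "v \<in> Sp F th n"
  shows "th * v \<in> Sp F th (Suc n)"
proof -
  from assms(2) obtain c where c: "\<forall>i. c i \<in> F" "v = (\<Sum>i<n. c i * th ^ i)"
    unfolding Sp_def by auto
  define d where "d i = (case i of 0 \<Rightarrow> 0 | Suc j \<Rightarrow> c j)" for i
  have "\<forall>i. d i \<in> F" using c F unfolding is_subfield_def d_def by (auto split: nat.split)
  moreover have "th * v = (\<Sum>i<Suc n. d i * th ^ i)"
    unfolding sum.lessThan_Suc_shift using c by (simp add: d_def sum_distrib_left algebra_simps)
  ultimately show ?thesis by (rule SpI)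
qed

lemma Sp_pow:
  assumes F: "is_subfield F" and "v \<in> Sp F th n"
  shows "th ^ i * v \<in> Sp F th (n + i)"
proof (induction i)
  case 0 then show ?case using assms by simp
next
  case (Suc i)
  then have "th * (th ^ i * v) \<in> Sp F th (Suc (n + i))" using Sp_shift[OF F] by blast
  then show ?case by (simp add: mult.assoc)
qed

lemma Sp_sum:
  assumes F: "is_subfield F" and "finite A" and "\<forall>a\<in>A. f a \<in> Sp F th n"
  shows "sum f A \<in> Sp F th n"
  using assms(2,3)
proof (induction A rule: finite_induct)
  case empty then show ?case using Sp_zero[OF F] by simp
next
  case (insert x A) then show ?case using Sp_add[OF F] by simp
qed

lemma Sp_mult:
  assumes F: "is_subfield F" and "u \<in> Sp F th (Suc n)" and "v \<in> Sp F th (Suc k)"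
  shows "u * v \<in> Sp F th (Suc (n + k))"
proof -
  from assms(2) obtain c where c: "\<forall>i. c i \<in> F" "u = (\<Sum>i<Suc n. c i * th ^ i)"
    unfolding Sp_def by auto
  have "u * v = (\<Sum>i<Suc n. c i * (th ^ i * v))"
    using c by (simp add: sum_distrib_right mult.assoc del: sum.lessThan_Suc)
  also have "\<dots> \<in> Sp F th (Suc (n + k))"
  proof (rule Sp_sum[OF F], simp, intro ballI)
    fix i assume "i \<in> {..<Suc n}"
    then have "Suc k + i \<le> Suc (n + k)" by simp
    then have "th ^ i * v \<in> Sp F th (Suc (n+k))"
      using Sp_mono[OF F _ Sp_pow[OF F assms(3)]] by blast
    then show "c i * (th ^ i * v) \<in> Sp F th (Suc (n + k))" using Sp_scale[OF F] c by blast
  qed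
  finally show ?thesis .
qed

lemma sf_add: "is_subfield F \<Longrightarrow> a \<in> F \<Longrightarrow> b \<in> F \<Longrightarrow> a + b \<in> F"
  unfolding is_subfield_def by blast
lemma sf_mult: "is_subfield F \<Longrightarrow> a \<in> F \<Longrightarrow> b \<in> F \<Longrightarrow> a * b \<in> F"
  unfolding is_subfield_def by blast
lemma sf_neg: "is_subfield F \<Longrightarrow> a \<in> F \<Longrightarrow> - a \<in> F"
  unfolding is_subfield_def by blast
lemma sf_inv: "is_subfield F \<Longrightarrow> a \<in> F \<Longrightarrow> inverse a \<in> F"
  unfolding is_subfield_def by blast

lemma sign_contra:
  assumes sp: "sign_partition F Fp Fm" and P: "P = Fp \<or> P = Fm"
  shows "a \<in> P \<Longrightarrow> b \<in> P \<Longrightarrow> b = - a \<Longrightarrow> False"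
proof -
  assume a: "a \<in> P" and b: "b \<in> P" and ba: "b = - a"
  have d: "Fp \<union> Fm = F - {0}" "Fp \<inter> Fm = {}" "\<forall>a\<in>F - {0}. a \<in> Fp \<longleftrightarrow> - a \<in> Fm"
    using sp unfolding sign_partition_def by auto
  have aF: "a \<in> F - {0}" using a P d(1) by blast
  from P show False
  proof
    assume "P = Fp" then show False using a b ba aF d by blast
  next
    assume "P = Fm" then show False using a b ba aF d by blast
  qed
qed

lemma part1:
  fixes F :: "'a::field set"
  assumes F: "is_subfield F" and sp: "sign_partition F Fp Fm" and th: "\<theta> \<notin> F"
    and P: "P = Fp \<or> P = Fm"
  shows "G_independent {(x, y * \<theta> + z) | x y z. x \<in> F \<and> z \<in> F \<and> y \<in> P}"
  unfolding G_independent_def G_adj_def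
proof (intro ballI notI)
  fix u v assume u: "u \<in> {(x, y * \<theta> + z) | x y z. x \<in> F \<and> z \<in> F \<and> y \<in> P}"
    and v: "v \<in> {(x, y * \<theta> + z) | x y z. x \<in> F \<and> z \<in> F \<and> y \<in> P}"
    and adj: "u \<noteq> v \<and> (fst u + fst v)\<^sup>2 = snd u + snd v"
  from u obtain x1 y1 z1 where u1: "u = (x1, y1*\<theta>+z1)" "x1 \<in> F" "z1 \<in> F" "y1 \<in> P" by auto
  from v obtain x2 y2 z2 where v1: "v = (x2, y2*\<theta>+z2)" "x2 \<in> F" "z2 \<in> F" "y2 \<in> P" by auto
  have eq: "(x1+x2)^2 - (z1+z2) = (y1+y2) * \<theta>" using adj u1 v1 by (simp add: algebra_simps)
  have Fc: "\<forall>a\<in>F. \<forall>b\<in>F. a + b \<in> F \<and> a * b \<in> F" "\<forall>a\<in>F. - a \<in> F \<and> inverse a \<in> F"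
    using F unfolding is_subfield_def by auto
  have PF: "P \<subseteq> F - {0}" using sp P unfolding sign_partition_def by auto
  have y1F: "y1 \<in> F" "y2 \<in> F" using PF u1 v1 by auto
  show False
  proof (cases "y1 + y2 = 0")
    case True
    then have "y2 = - y1" by (simp add: add_eq_0_iff)
    then show False by (rule sign_contra[OF sp P u1(4) v1(4)])
  next
    case False
    have s1: "x1 + x2 \<in> F" "z1 + z2 \<in> F" using sf_add[OF F] u1(2,3) v1(2,3) by auto
    have s2: "(x1+x2)*(x1+x2) \<in> F" using sf_mult[OF F s1(1) s1(1)] .
    have s3: "- (z1+z2) \<in> F" using sf_neg[OF F s1(2)] .
    have s4: "(x1+x2)*(x1+x2) + - (z1+z2) \<in> F" using sf_add[OF F s2 s3] .
    have a: "(x1+x2)^2 - (z1+z2) \<in> F" using s4 by (simp only: power2_eq_square diff_conv_add_uminus)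
    have b: "inverse (y1+y2) \<in> F" using sf_inv[OF F sf_add[OF F y1F]] .
    have c: "inverse (y1+y2) * ((x1+x2)^2 - (z1+z2)) \<in> F" using sf_mult[OF F b a] .
    have "\<theta> = inverse (y1+y2) * ((x1+x2)^2 - (z1+z2))" using eq False by (simp add: field_simps)
    then have "\<theta> \<in> F" using c by simp
    then show False using th by simp
  qed
qed

lemma part2:
  fixes F :: "'a::field set"
  assumes F: "is_subfield F" and sp: "sign_partition F Fp Fm" and t3: "t \<ge> 3" and odd: "odd t"
    and pb: "power_basis F t \<theta>" and P: "P = Fp \<or> P = Fm"
  shows "G_independent {((\<Sum>i=0..(t-3) div 2. x i * \<theta> ^ i), (\<Sum>j=0..t-1. y j * \<theta> ^ j)) | x y.
          (\<forall>i. x i \<in> F) \<and> (\<forall>j. y j \<in> F) \<and> y (t-1) \<in> P}"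
  unfolding G_independent_def G_adj_def
proof (intro ballI notI)
  define m where "m = (t-3) div 2"
  have tm: "t = 2*m + 3" using t3 odd unfolding m_def by (auto elim!: oddE)
  have r1: "{0..(t-3) div 2} = {..<Suc m}" unfolding m_def by auto
  have r2: "{0..t-1} = {..<t}" using t3 by auto
  fix u v assume u: "u \<in> {((\<Sum>i=0..(t-3) div 2. x i * \<theta> ^ i), (\<Sum>j=0..t-1. y j * \<theta> ^ j)) | x y.
          (\<forall>i. x i \<in> F) \<and> (\<forall>j. y j \<in> F) \<and> y (t-1) \<in> P}"
    and v: "v \<in> {((\<Sum>i=0..(t-3) div 2. x i * \<theta> ^ i), (\<Sum>j=0..t-1. y j * \<theta> ^ j)) | x y.
          (\<forall>i. x i \<in> F) \<and> (\<forall>j. y j \<in> F) \<and> y (t-1) \<in> P}"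
    and adj: "u \<noteq> v \<and> (fst u + fst v)\<^sup>2 = snd u + snd v"
  from u obtain x1 y1 where u1: "u = ((\<Sum>i<Suc m. x1 i * \<theta> ^ i), (\<Sum>j<t. y1 j * \<theta> ^ j))"
     "\<forall>i. x1 i \<in> F" "\<forall>j. y1 j \<in> F" "y1 (t-1) \<in> P" unfolding r1 r2 by blast
  from v obtain x2 y2 where v1: "v = ((\<Sum>i<Suc m. x2 i * \<theta> ^ i), (\<Sum>j<t. y2 j * \<theta> ^ j))"
     "\<forall>i. x2 i \<in> F" "\<forall>j. y2 j \<in> F" "y2 (t-1) \<in> P" unfolding r1 r2 by blast
  have Fc: "\<forall>a\<in>F. \<forall>b\<in>F. a + b \<in> F \<and> a * b \<in> F" "\<forall>a\<in>F. - a \<in> F \<and> inverse a \<in> F"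
    using F unfolding is_subfield_def by auto
  have s1: "\<forall>i. x1 i + x2 i \<in> F" using sf_add[OF F] u1(2) v1(2) by auto
  have s2: "fst u + fst v = (\<Sum>i<Suc m. (x1 i + x2 i) * \<theta> ^ i)"
    using u1 v1 by (simp add: sum.distrib distrib_right del: sum.lessThan_Suc)
  have s: "fst u + fst v \<in> Sp F \<theta> (Suc m)" by (rule SpI[OF s1 s2])
  have "(fst u + fst v)^2 \<in> Sp F \<theta> (Suc (m + m))"
    using Sp_mult[OF F s s] by (simp add: power2_eq_square)
  then obtain c where c: "\<forall>i. c i \<in> F" "(fst u + fst v)^2 = (\<Sum>i<Suc (m+m). c i * \<theta> ^ i)"
    unfolding Sp_def by auto
  define c' where "c' i = (if i < Suc (m+m) then c i else 0)" for i
  have c'eq: "(fst u + fst v)^2 = (\<Sum>i<t. c' i * \<theta> ^ i)"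
    using c sum_pad[of "Suc (m+m)" t c \<theta>] tm unfolding c'_def by simp
  define d where "d j = y1 j + y2 j - c' j" for j
  have c'F: "c' j \<in> F" for j using c F unfolding c'_def is_subfield_def by auto
  have dF: "\<forall>j. d j \<in> F"
  proof
    fix j
    have "y1 j + y2 j \<in> F" using sf_add[OF F] u1(3) v1(3) by auto
    moreover have "- c' j \<in> F" using sf_neg[OF F c'F] .
    ultimately have "y1 j + y2 j + - c' j \<in> F" by (rule sf_add[OF F])
    then show "d j \<in> F" unfolding d_def by simp
  qed
  have "(\<Sum>j<t. d j * \<theta> ^ j) = (\<Sum>j<t. y1 j * \<theta> ^ j) + (\<Sum>j<t. y2 j * \<theta> ^ j) - (\<Sum>j<t. c' j * \<theta> ^ j)"
    unfolding d_def by (simp add: sum.distrib sum_subtractf algebra_simps)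
  also have "\<dots> = 0"
  proof -
    have "(fst u + fst v)^2 = snd u + snd v" using adj by blast
    then show ?thesis using c'eq u1(1) v1(1) by simp
  qed
  finally have sum0: "(\<Sum>j<t. d j * \<theta> ^ j) = 0" .
  have pb2: "\<forall>c. (\<forall>i<t. c i \<in> F) \<and> (\<Sum>i<t. c i * \<theta> ^ i) = 0 \<longrightarrow> (\<forall>i<t. c i = 0)"
    using pb unfolding power_basis_def by (rule conjunct2)
  have "(\<forall>i<t. d i \<in> F) \<and> (\<Sum>i<t. d i * \<theta> ^ i) = 0 \<longrightarrow> (\<forall>i<t. d i = 0)"
    using pb2 by (rule spec)
  moreover have "(\<forall>i<t. d i \<in> F) \<and> (\<Sum>i<t. d i * \<theta> ^ i) = 0" using dF sum0 by blast
  ultimately have dz: "\<forall>i<t. d i = 0" by (rule mp)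
  have d0: "d (t-1) = 0" using dz t3 by simp
  have c0: "c' (t-1) = 0" using tm unfolding c'_def by simp
  have yy: "y2 (t-1) = - y1 (t-1)" using d0 c0 unfolding d_def by (simp add: add_eq_0_iff)
  show False by (rule sign_contra[OF sp P u1(4) v1(4) yy])
qed

theorem lemma3p1:
  shows
  "(\<forall>(F :: 'a::{field,finite} set) Fp Fm \<theta>.
      is_subfield F \<and> odd_prime_power (card F) \<and> card (UNIV :: 'a set) = card F ^ 2 \<and>
      sign_partition F Fp Fm \<and> \<theta> \<notin> F \<longrightarrow>
      G_independent {(x, y * \<theta> + z) | x y z. x \<in> F \<and> z \<in> F \<and> y \<in> Fp} \<and>
      G_independent {(x, y * \<theta> + z) | x y z. x \<in> F \<and> z \<in> F \<and> y \<in> Fm})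
   \<and>
   (\<forall>(F :: 'b::{field,finite} set) Fp Fm (t::nat) \<theta>.
      is_subfield F \<and> odd_prime_power (card F) \<and> card (UNIV :: 'b set) = card F ^ t \<and>
      sign_partition F Fp Fm \<and> t \<ge> 3 \<and> odd t \<and> power_basis F t \<theta> \<longrightarrow>
      G_independent {((\<Sum>i=0..(t-3) div 2. x i * \<theta> ^ i), (\<Sum>j=0..t-1. y j * \<theta> ^ j)) | x y.
          (\<forall>i. x i \<in> F) \<and> (\<forall>j. y j \<in> F) \<and> y (t-1) \<in> Fp} \<and>
      G_independent {((\<Sum>i=0..(t-3) div 2. x i * \<theta> ^ i), (\<Sum>j=0..t-1. y j * \<theta> ^ j)) | x y.
          (\<forall>i. x i \<in> F) \<and> (\<forall>j. y j \<in> F) \<and> y (t-1) \<in> Fm})"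
proof (intro conjI allI impI)
  fix F :: "'a set" and Fp Fm \<theta>
  assume h: "is_subfield F \<and> odd_prime_power (card F) \<and> card (UNIV :: 'a set) = card F ^ 2 \<and>
      sign_partition F Fp Fm \<and> \<theta> \<notin> F"
  then show "G_independent {(x, y * \<theta> + z) | x y z. x \<in> F \<and> z \<in> F \<and> y \<in> Fp}"
    using part1[of F Fp Fm \<theta> Fp] by blast
  from h show "G_independent {(x, y * \<theta> + z) | x y z. x \<in> F \<and> z \<in> F \<and> y \<in> Fm}"
    using part1[of F Fp Fm \<theta> Fm] by blast
next
  fix F :: "'b set" and Fp Fm and t :: nat and \<theta>
  assume h: "is_subfield F \<and> odd_prime_power (card F) \<and> card (UNIV :: 'b set) = card F ^ t \<and>
      sign_partition F Fp Fm \<and> t \<ge> 3 \<and> odd t \<and> power_basis F t \<theta>"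
  then show "G_independent {((\<Sum>i=0..(t-3) div 2. x i * \<theta> ^ i), (\<Sum>j=0..t-1. y j * \<theta> ^ j)) | x y.
          (\<forall>i. x i \<in> F) \<and> (\<forall>j. y j \<in> F) \<and> y (t-1) \<in> Fp}"
    using part2[of F Fp Fm t \<theta> Fp] by blast
  from h show "G_independent {((\<Sum>i=0..(t-3) div 2. x i * \<theta> ^ i), (\<Sum>j=0..t-1. y j * \<theta> ^ j)) | x y.
          (\<forall>i. x i \<in> F) \<and> (\<forall>j. y j \<in> F) \<and> y (t-1) \<in> Fm}"
    using part2[of F Fp Fm t \<theta> Fm] by blast
qed

end
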